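(* Let $n\ge 2$, $A\in\mathrm{Mat}_{n\times n}(\mathbb{R})$, and let $q\in\mathbb{R}^n$ be a formal equilibrium of the replicator vector field $X_A$. Let $B=-EAE^t$, $\eta_q(u)_i=q_i-\frac{e^{u_i}}{1+\sum_{j=1}^{n-1}e^{u_j}}$ ($u\in\mathbb{R}^{n-1}$), and $\tilde X_B(u)=B\eta_q(u)$. Suppose $D=(d_{ij})\in\mathrm{Mat}_{(n-1)\times(n-1)}(\mathbb{R})$ satisfies: (1) $DB$ is anti-symmetric; (2) $D^tQ_1$ is diagonal, where $(Q_1)_{ij}=q_i-\delta_{ij}$ (equivalently, the 1-form $(1+\sum_i e^{u_i})D^t\eta_q(u)$ is closed). Let $$H_D(u)=\sum_{i=1}^{n-1}\Big(\sum_{k=1}^{n-1}d_{ki}q_k\Big)u_i+\sum_{i=1}^{n-1}\Big(\Big(\sum_{k=1}^{n-1}d_{ki}q_k\Big)-d_{ii}\Big)e^{u_i},$$ $\mathbf{B}(u)=(1+\sum_{i=1}^{n-1}e^{u_i})B$, $\mathbf{D}^t(u)=(1+\sum_{i=1}^{n-1}e^{u_i})D^t$, and $\tilde Y_B=(1+\sum_{i=1}^{n-1}e^{u_i})\tilde X_B$. Then $L_{(\mathbf{B},\mathbf{D}^t)}=\{(\mathbf{B}(u)z,\mathbf{D}^t(u)z): z\in\mathbb{R}^{n-1}\}$ is a big-isotropic structure on $\mathbb{R}^{n-1}$ (a Dirac structure when $\ker B\cap\ker D^t=\{0\}$), and $(\tilde Y_B,dH_D)$ is a Hamiltonian system with respect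 to it, i.e. $(\tilde Y_B,dH_D)$ is a section of $L_{(\mathbf{B},\mathbf{D}^t)}$.
   Context: The replicator vector field is $X_A(x)_i=x_i((Ax)_i-x^tAx)$ on $\Delta^{n-1}=\{x\in\mathbb{R}^n_{\ge0}:\sum x_i=1\}$. A formal equilibrium is $q\in\mathbb{R}^n$ with $\sum_i q_i=1$ and $(Aq)_i=(Aq)_j$ for all $i,j$. $E=[-I_{n-1}\mid\mathbb{1}]$ ($(n-1)\times n$). $\tilde X_B$ is the pullback of $X_A$ to $\mathbb{R}^{n-1}$ by $\phi(u)=\big(\frac{e^{u_1}}{1+\sum_j e^{u_j}},\dots,\frac{e^{u_{n-1}}}{1+\sum_j e^{u_j}},\frac{1}{1+\sum_j e^{u_j}}\big)$. On $\mathbb{T}M=TM\oplus T^*M$ use the pairing $\frac12(\beta(X)+\alpha(Y))$ and Courant bracket $\big([X,Y],\mathcal{L}_X\beta-\mathcal{L}_Y\alpha+\frac12 d(\alpha(Y)-\beta(X))\big)$; a big-isotropic structure is an isotropic subbundle closed under the Courant bracket, a Dirac structure a maximal isotropic one closed under the bracket. A vector field $X$ is Hamiltonian with Hamiltonian $H$ with respect to such $L$ if $(X,dH)\in L$. *)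

theory Defs
  imports "HOL-Analysis.Analysis"
begin

text \<open>The phase space R^(n-1) is real^'m (so n-1 = CARD('m) >= 1, i.e. n >= 2).
  R^n is real^('m option): index Some i is the i-th coordinate (i = 1..n-1) and
  None is the n-th (last) coordinate. Tangent vectors and covectors at a point of
  R^(n-1) are both represented by elements of real^'m, covectors acting by inner product.\<close>

definition formal_equilibrium :: "real^'n^'n \<Rightarrow> real^'n \<Rightarrow> bool" where
  "formal_equilibrium A q \<longleftrightarrow> sum (\<lambda>i. q $ i) UNIV = 1 \<and> (\<forall>i j. (A *v q) $ i = (A *v q) $ j)"

text \<open>E = [-I_(n-1) | 1], an (n-1) x n matrix.\<close>
definition Emat :: "real^('m option)^'m" where
  "Emat = (\<chi> i j. if j = Some i then -1 else if j = None then 1 else 0)"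

definition Bmat :: "real^('m option)^('m option) \<Rightarrow> real^'m^'m" where
  "Bmat A = - (Emat ** A ** transpose Emat)"

definition esum :: "real^'m \<Rightarrow> real" where
  "esum u = 1 + (\<Sum>j\<in>UNIV. exp (u $ j))"

definition eta :: "real^('m option) \<Rightarrow> real^'m \<Rightarrow> real^'m" where
  "eta q u = (\<chi> i. q $ Some i - exp (u $ i) / esum u)"

definition Xtilde :: "real^('m option)^('m option) \<Rightarrow> real^('m option) \<Rightarrow> real^'m \<Rightarrow> real^'m" where
  "Xtilde A q u = Bmat A *v eta q u"

definition Ytilde :: "real^('m option)^('m option) \<Rightarrow> real^('m option) \<Rightarrow> real^'m \<Rightarrow> real^'m" where
  "Ytilde A q u = esum u *\<^sub>R Xtilde A q u"

definition Q1 :: "real^('m option) \<Rightarrow> real^'m^'m" where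
  "Q1 q = (\<chi> i j. q $ Some i - (if i = j then 1 else 0))"

definition is_diagonal :: "real^'m^'m \<Rightarrow> bool" where
  "is_diagonal M \<longleftrightarrow> (\<forall>i j. i \<noteq> j \<longrightarrow> M $ i $ j = 0)"

definition antisymmetric_mat :: "real^'m^'m \<Rightarrow> bool" where
  "antisymmetric_mat M \<longleftrightarrow> transpose M = - M"

definition H_D :: "real^'m^'m \<Rightarrow> real^('m option) \<Rightarrow> real^'m \<Rightarrow> real" where
  "H_D D q u = (\<Sum>i\<in>UNIV. (\<Sum>k\<in>UNIV. D $ k $ i * q $ Some k) * u $ i)
             + (\<Sum>i\<in>UNIV. ((\<Sum>k\<in>UNIV. D $ k $ i * q $ Some k) - D $ i $ i) * exp (u $ i))"

definition L_BD :: "real^'m^'m \<Rightarrow> real^'m^'m \<Rightarrow> real^'m \<Rightarrow> ((real^'m) \<times> (real^'m)) set" where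
  "L_BD B D u = {(esum u *\<^sub>R (B *v z), esum u *\<^sub>R (transpose D *v z)) | z. True}"

definition pderiv_at :: "(real^'m \<Rightarrow> 'b::real_normed_vector) \<Rightarrow> 'm \<Rightarrow> real^'m \<Rightarrow> 'b" where
  "pderiv_at f i x = frechet_derivative f (at x) (axis i 1)"

fun Ck :: "nat \<Rightarrow> (real^'m \<Rightarrow> real^'k) \<Rightarrow> bool" where
  "Ck 0 f = continuous_on UNIV f"
| "Ck (Suc k) f = ((\<forall>x. f differentiable (at x)) \<and> (\<forall>i. Ck k (pderiv_at f i)))"

definition smooth :: "(real^'m \<Rightarrow> real^'k) \<Rightarrow> bool" where
  "smooth f \<longleftrightarrow> (\<forall>k. Ck k f)"

definition lie_bracket :: "(real^'m \<Rightarrow> real^'m) \<Rightarrow> (real^'m \<Rightarrow> real^'m) \<Rightarrow> real^'m \<Rightarrow> real^'m" where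
  "lie_bracket X Y x = frechet_derivative Y (at x) (X x) - frechet_derivative X (at x) (Y x)"

definition lie_deriv_form :: "(real^'m \<Rightarrow> real^'m) \<Rightarrow> (real^'m \<Rightarrow> real^'m) \<Rightarrow> real^'m \<Rightarrow> real^'m" where
  "lie_deriv_form X b x = frechet_derivative b (at x) (X x) + (\<chi> i. b x \<bullet> pderiv_at X i x)"

definition dfun :: "(real^'m \<Rightarrow> real) \<Rightarrow> real^'m \<Rightarrow> real^'m" where
  "dfun f x = (\<chi> i. pderiv_at f i x)"

definition courant :: "(real^'m \<Rightarrow> (real^'m) \<times> (real^'m)) \<Rightarrow> (real^'m \<Rightarrow> (real^'m) \<times> (real^'m))
     \<Rightarrow> real^'m \<Rightarrow> (real^'m) \<times> (real^'m)" where
  "courant s1 s2 x =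
     (let X = fst \<circ> s1; a = snd \<circ> s1; Y = fst \<circ> s2; b = snd \<circ> s2 in
      (lie_bracket X Y x,
       lie_deriv_form X b x - lie_deriv_form Y a x
         + (1/2) *\<^sub>R dfun (\<lambda>y. a y \<bullet> Y y - b y \<bullet> X y) x))"

definition pairing :: "(real^'m) \<times> (real^'m) \<Rightarrow> (real^'m) \<times> (real^'m) \<Rightarrow> real" where
  "pairing p1 p2 = (1/2) * (snd p2 \<bullet> fst p1 + snd p1 \<bullet> fst p2)"

definition smooth_section :: "(real^'m \<Rightarrow> ((real^'m) \<times> (real^'m)) set) \<Rightarrow> (real^'m \<Rightarrow> (real^'m) \<times> (real^'m)) \<Rightarrow> bool" where
  "smooth_section L s \<longleftrightarrow> smooth (fst \<circ> s) \<and> smooth (snd \<circ> s) \<and> (\<forall>x. s x \<in> L x)"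

text \<open>Smooth subbundle: linear fibres of constant dimension, every vector of a fibre
  extends to a smooth section (hence local smooth frames exist).\<close>
definition smooth_subbundle :: "(real^'m \<Rightarrow> ((real^'m) \<times> (real^'m)) set) \<Rightarrow> bool" where
  "smooth_subbundle L \<longleftrightarrow> (\<forall>x. subspace (L x)) \<and> (\<forall>x y. dim (L x) = dim (L y))
     \<and> (\<forall>x w. w \<in> L x \<longrightarrow> (\<exists>s. smooth_section L s \<and> s x = w))"

definition isotropic :: "((real^'m) \<times> (real^'m)) set \<Rightarrow> bool" where
  "isotropic W \<longleftrightarrow> (\<forall>p\<in>W. \<forall>p'\<in>W. pairing p p' = 0)"

definition courant_closed :: "(real^'m \<Rightarrow> ((real^'m) \<times> (real^'m)) set) \<Rightarrow> bool" where
  "courant_closed L \<longleftrightarrow> (\<forall>s1 s2. smooth_section L s1 \<longrightarrow> smooth_section L s2 \<longrightarrow>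
       (\<forall>x. courant s1 s2 x \<in> L x))"

definition big_isotropic :: "(real^'m \<Rightarrow> ((real^'m) \<times> (real^'m)) set) \<Rightarrow> bool" where
  "big_isotropic L \<longleftrightarrow> smooth_subbundle L \<and> (\<forall>x. isotropic (L x)) \<and> courant_closed L"

definition maximal_isotropic :: "((real^'m) \<times> (real^'m)) set \<Rightarrow> bool" where
  "maximal_isotropic W \<longleftrightarrow> isotropic W \<and>
     (\<forall>V. subspace V \<longrightarrow> W \<subseteq> V \<longrightarrow> isotropic V \<longrightarrow> V = W)"

definition dirac :: "(real^'m \<Rightarrow> ((real^'m) \<times> (real^'m)) set) \<Rightarrow> bool" where
  "dirac L \<longleftrightarrow> big_isotropic L \<and> (\<forall>x. maximal_isotropic (L x))"

end

theory Submission imports Defs begin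

lemma inner_transpose_mv: "inner (transpose M *v x) (y::real^'n) = inner x (M *v y)"
  by (simp add: inner_vec_def matrix_vector_mult_def transpose_def sum_distrib_left sum_distrib_right mult_ac)
     (rule sum.swap)

lemma deriv_in_subspace:
  fixes F :: "'a::real_normed_vector \<Rightarrow> 'b::euclidean_space"
  assumes W: "subspace W" and FW: "\<And>y. F y \<in> W" and d: "(F has_derivative F') (at x)"
  shows "F' h \<in> W"
proof -
  obtain y z where y: "y \<in> span W" and orth: "\<And>w. w \<in> span W \<Longrightarrow> orthogonal z w"
    and eq: "F' h = y + z"
    using orthogonal_subspace_decomp_exists[of W "F' h"] by blast
  have 1: "((\<lambda>t. z \<bullet> F t) has_derivative (\<lambda>h. z \<bullet> F' h)) (at x)"
    using d by (rule has_derivative_inner_right)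
  have "(\<lambda>t. z \<bullet> F t) = (\<lambda>t. 0)"
    using orth FW span_superset by (force simp: orthogonal_def)
  then have 2: "((\<lambda>t. z \<bullet> F t) has_derivative (\<lambda>h. 0)) (at x)" by simp
  have "(\<lambda>h. z \<bullet> F' h) = (\<lambda>h. 0)" using has_derivative_unique[OF 1 2] .
  then have "z \<bullet> F' h = 0" by metis
  moreover have "z \<bullet> y = 0" using orth[OF y] by (simp add: orthogonal_def)
  ultimately have "z \<bullet> z = 0" by (simp add: eq inner_add_right)
  then have "z = 0" by simp
  then show ?thesis using eq y W by (metis add.right_neutral span_eq_iff)
qed

lemma Ck_const: fixes c :: "real^'k" shows "Ck k (\<lambda>x::real^'m. c)"
proof (induction k arbitrary: c)
  case 0 then show ?case by simp
next
  case (Suc k)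
  have "pderiv_at (\<lambda>x::real^'m. c) i = (\<lambda>x. 0)" for i
    unfolding pderiv_at_def
  proof (rule ext)
    fix x :: "real^'m"
    have "frechet_derivative (\<lambda>x::real^'m. c) (at x) = (\<lambda>h. 0)"
      by (metis frechet_derivative_at has_derivative_const)
    then show "frechet_derivative (\<lambda>x. c) (at x) (axis i 1) = 0" by simp
  qed
  then show ?case using Suc by simp
qed


lemma neg_mv: "(- M) *v (x::real^'n) = - (M *v x)"
  by (simp add: vec_eq_iff matrix_vector_mult_def sum_negf)

lemma esum_pos: "esum u > 0"
  unfolding esum_def by (smt (verit) exp_ge_zero sum_nonneg)

definition Wset :: "real^'m^'m \<Rightarrow> real^'m^'m \<Rightarrow> ((real^'m) \<times> (real^'m)) set" where
  "Wset B D = range (\<lambda>z. (B *v z, transpose D *v z))"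

lemma L_eq: "L_BD B D u = Wset B D"
proof -
  have e: "esum u \<noteq> 0" using esum_pos[of u] by simp
  show ?thesis
    unfolding L_BD_def Wset_def
  proof (intro set_eqI iffI)
    fix p assume "p \<in> {(esum u *\<^sub>R (B *v z), esum u *\<^sub>R (transpose D *v z)) |z. True}"
    then obtain z where "p = (esum u *\<^sub>R (B *v z), esum u *\<^sub>R (transpose D *v z))" by blast
    then have "p = (B *v (esum u *\<^sub>R z), transpose D *v (esum u *\<^sub>R z))"
      by (simp add: matrix_vector_mult_scaleR)
    then show "p \<in> range (\<lambda>z. (B *v z, transpose D *v z))" by blast
  next
    fix p assume "p \<in> range (\<lambda>z. (B *v z, transpose D *v z))"
    then obtain z where "p = (B *v z, transpose D *v z)" by blast
    then have "p = (esum u *\<^sub>R (B *v (inverse (esum u) *\<^sub>R z)), esum u *\<^sub>R (transpose D *v (inverse (esum u) *\<^sub>R z)))"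
      using e by (simp add: matrix_vector_mult_scaleR)
    then show "p \<in> {(esum u *\<^sub>R (B *v z), esum u *\<^sub>R (transpose D *v z)) |z. True}" by blast
  qed
qed

lemma linear_W: fixes B D :: "real^'a^'a" shows "linear (\<lambda>z. (B *v z, transpose D *v z))"
proof (rule linearI)
  fix b1 b2 :: "real^'a"
  show "(B *v (b1 + b2), transpose D *v (b1 + b2)) = (B *v b1, transpose D *v b1) + (B *v b2, transpose D *v b2)"
    by (simp only: matrix_vector_right_distrib add_Pair)
next
  fix r :: real and b :: "real^'a"
  show "(B *v r *\<^sub>R b, transpose D *v r *\<^sub>R b) = r *\<^sub>R (B *v b, transpose D *v b)"
    by (simp only: matrix_vector_mult_scaleR scaleR_prod_def fst_conv snd_conv)
qed

lemma subspace_W: "subspace (Wset B D)"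
  unfolding Wset_def by (rule linear_subspace_image[OF linear_W subspace_UNIV])

lemma W_iso:
  assumes h: "antisymmetric_mat (D ** B)" and p: "p \<in> Wset B D" and p': "p' \<in> Wset B D"
  shows "pairing p p' = 0"
proof -
  obtain z where z: "p = (B *v z, transpose D *v z)" using p unfolding Wset_def by blast
  obtain w where w: "p' = (B *v w, transpose D *v w)" using p' unfolding Wset_def by blast
  let ?M = "D ** B"
  have 1: "(transpose D *v w) \<bullet> (B *v z) = w \<bullet> (?M *v z)"
    by (simp only: inner_transpose_mv matrix_vector_mul_assoc)
  have 2: "(transpose D *v z) \<bullet> (B *v w) = z \<bullet> (?M *v w)"
    by (simp only: inner_transpose_mv matrix_vector_mul_assoc)
  have "z \<bullet> (?M *v w) = (transpose ?M *v z) \<bullet> w" by (simp only: inner_transpose_mv)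
  also have "\<dots> = - ((?M *v z) \<bullet> w)" using h unfolding antisymmetric_mat_def
    by (simp add: neg_mv)
  finally show ?thesis unfolding pairing_def z w using 1 2 by (simp add: inner_commute)
qed


lemma smooth_hasderiv: "smooth f \<Longrightarrow> (f has_derivative frechet_derivative f (at x)) (at x)"
  unfolding smooth_def by (metis Ck.simps(2) frechet_derivative_works)

lemma courant_W:
  fixes B D :: "real^'m^'m"
  assumes h1: "antisymmetric_mat (D ** B)"
    and s1: "smooth_section (L_BD B D) s1" and s2: "smooth_section (L_BD B D) s2"
  shows "courant s1 s2 x \<in> Wset B D"
proof -
  let ?W = "Wset B D"
  define X where "X = fst \<circ> s1"
  define a where "a = snd \<circ> s1"
  define Y where "Y = fst \<circ> s2"
  define b where "b = snd \<circ> s2"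
  define X' where "X' = frechet_derivative X (at x)"
  define a' where "a' = frechet_derivative a (at x)"
  define Y' where "Y' = frechet_derivative Y (at x)"
  define b' where "b' = frechet_derivative b (at x)"
  have dX: "(X has_derivative X') (at x)" unfolding X'_def
    using s1 smooth_hasderiv unfolding smooth_section_def X_def by blast
  have da: "(a has_derivative a') (at x)" unfolding a'_def
    using s1 smooth_hasderiv unfolding smooth_section_def a_def by blast
  have dY: "(Y has_derivative Y') (at x)" unfolding Y'_def
    using s2 smooth_hasderiv unfolding smooth_section_def Y_def by blast
  have db: "(b has_derivative b') (at x)" unfolding b'_def
    using s2 smooth_hasderiv unfolding smooth_section_def b_def by blast
  have in1: "(X y, a y) \<in> ?W" for y
    using s1 L_eq[of B D y] unfolding smooth_section_def X_def a_def by auto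
  have in2: "(Y y, b y) \<in> ?W" for y
    using s2 L_eq[of B D y] unfolding smooth_section_def Y_def b_def by auto
  have din1: "(X' h, a' h) \<in> ?W" for h
    by (rule deriv_in_subspace[OF subspace_W, of "\<lambda>y. (X y, a y)"]) (use in1 has_derivative_Pair[OF dX da] in auto)
  have din2: "(Y' h, b' h) \<in> ?W" for h
    by (rule deriv_in_subspace[OF subspace_W, of "\<lambda>y. (Y y, b y)"]) (use in2 has_derivative_Pair[OF dY db] in auto)
  have i1: "b x \<bullet> X' e + a' e \<bullet> Y x = 0" for e
    using W_iso[OF h1 din1[of e] in2[of x]] by (simp add: pairing_def)
  have i2: "a x \<bullet> Y' e + b' e \<bullet> X x = 0" for e
    using W_iso[OF h1 din2[of e] in1[of x]] by (simp add: pairing_def)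
  define G where "G = (\<lambda>h. (a x \<bullet> Y' h + a' h \<bullet> Y x) - (b x \<bullet> X' h + b' h \<bullet> X x))"
  have dg: "((\<lambda>y. a y \<bullet> Y y - b y \<bullet> X y) has_derivative G) (at x)"
    unfolding G_def by (rule has_derivative_diff[OF has_derivative_inner[OF da dY] has_derivative_inner[OF db dX]])
  have dfg: "dfun (\<lambda>y. a y \<bullet> Y y - b y \<bullet> X y) x = (\<chi> i. G (axis i 1))"
    unfolding dfun_def pderiv_at_def using frechet_derivative_at[OF dg] by simp
  have c: "courant s1 s2 x = (lie_bracket X Y x,
       lie_deriv_form X b x - lie_deriv_form Y a x + (1/2) *\<^sub>R dfun (\<lambda>y. a y \<bullet> Y y - b y \<bullet> X y) x)"
    unfolding courant_def Let_def X_def Y_def a_def b_def by simp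
  have c2: "lie_deriv_form X b x - lie_deriv_form Y a x + (1/2) *\<^sub>R dfun (\<lambda>y. a y \<bullet> Y y - b y \<bullet> X y) x
      = b' (X x) - a' (Y x)"
  proof -
    have "(\<chi> i. b x \<bullet> X' (axis i 1)) - (\<chi> i. a x \<bullet> Y' (axis i 1)) + (1/2) *\<^sub>R (\<chi> i. G (axis i 1)) = (0::real^'m)"
    proof (subst vec_eq_iff, rule allI)
      fix i
      show "((\<chi> i. b x \<bullet> X' (axis i 1)) - (\<chi> i. a x \<bullet> Y' (axis i 1)) + (1/2) *\<^sub>R (\<chi> i. G (axis i 1))) $ i = (0::real^'m) $ i"
      proof -
        have "((\<chi> i. b x \<bullet> X' (axis i 1)) - (\<chi> i. a x \<bullet> Y' (axis i 1)) + (1/2) *\<^sub>R (\<chi> i. G (axis i 1))) $ i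
           = b x \<bullet> X' (axis i 1) - a x \<bullet> Y' (axis i 1) + (1/2) * ((a x \<bullet> Y' (axis i 1) + a' (axis i 1) \<bullet> Y x) - (b x \<bullet> X' (axis i 1) + b' (axis i 1) \<bullet> X x))"
          by (simp add: G_def)
        also have "\<dots> = 0" using i1[of "axis i 1"] i2[of "axis i 1"] by (simp add: algebra_simps)
        finally show ?thesis by simp
      qed
    qed
    then show ?thesis
      unfolding lie_deriv_form_def pderiv_at_def dfg X'_def[symmetric] Y'_def[symmetric] a'_def[symmetric] b'_def[symmetric]
      by (simp add: algebra_simps)
  qed
  have "courant s1 s2 x = (Y' (X x), b' (X x)) - (X' (Y x), a' (Y x))"
    unfolding c c2 lie_bracket_def X'_def Y'_def by simp
  then show ?thesis using din1 din2 subspace_W by (metis subspace_diff)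
qed


lemma maxiso_W:
  fixes B D :: "real^'m^'m"
  assumes h1: "antisymmetric_mat (D ** B)"
    and ker: "\<forall>z. B *v z = 0 \<and> transpose D *v z = 0 \<longrightarrow> z = 0"
  shows "maximal_isotropic (Wset B D)"
  unfolding maximal_isotropic_def
proof (intro conjI allI impI)
  show "isotropic (Wset B D)" unfolding isotropic_def using W_iso[OF h1] by blast
  fix V :: "((real^'m) \<times> (real^'m)) set"
  assume V: "subspace V" "Wset B D \<subseteq> V" "isotropic V"
  let ?f = "\<lambda>z::real^'m. (B *v z, transpose D *v z)"
  have inj: "inj_on ?f (span UNIV)"
  proof (rule inj_onI)
    fix z w :: "real^'m" assume "?f z = ?f w"
    then have "B *v (z - w) = 0 \<and> transpose D *v (z - w) = 0"
      by (simp add: matrix_vector_mult_diff_distrib)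
    then have "z - w = 0" using ker by blast
    then show "z = w" by simp
  qed
  have dW: "dim (Wset B D) = DIM(real^'m)"
  proof -
    have "dim (range ?f) = dim (UNIV::(real^'m) set)" by (rule eucl.dim_image_eq[OF linear_W inj])
    then show ?thesis unfolding Wset_def by (simp only: eucl.dim_UNIV)
  qed
  define J where "J = (\<lambda>p::(real^'m) \<times> (real^'m). (snd p, fst p))"
  have linJ: "linear J" unfolding J_def by (rule linearI) (simp_all add: prod_eq_iff)
  have injJ: "inj_on J (span V)" unfolding J_def by (rule inj_onI) (simp add: prod_eq_iff)
  have dJ: "dim (J ` V) = dim V" using eucl.dim_image_eq[OF linJ injJ] .
  have orth: "x \<bullet> y = 0" if xV: "x \<in> V" and yJ: "y \<in> J ` V" for x y
  proof -
    obtain p where p: "p \<in> V" "y = J p" using yJ by blast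
    have "pairing x p = 0" using V(3) xV p(1) unfolding isotropic_def by blast
    then show ?thesis unfolding p J_def pairing_def inner_prod_def by (simp add: inner_commute)
  qed
  have "dim (V \<union> J ` V) = dim V + dim (J ` V)"
    by (rule dim_orthogonal_sum) (use orth in blast)
  moreover have "dim (V \<union> J ` V) \<le> DIM((real^'m) \<times> (real^'m))" by (rule eucl.dim_subset_UNIV)
  ultimately have "dim V \<le> DIM(real^'m)" using dJ by (simp add: DIM_prod)
  then have "Wset B D = V"
    using subspace_dim_equal[OF subspace_W V(1) V(2)] dW by simp
  then show "V = Wset B D" by simp
qed


lemma ham:
  fixes D :: "real^'m^'m" and q :: "real^('m option)" and A :: "real^('m option)^('m option)"
  assumes h2: "is_diagonal (transpose D ** Q1 q)"
  shows "(H_D D q has_derivative (\<lambda>v. dfun (H_D D q) u \<bullet> v)) (at u)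
     \<and> (Ytilde A q u, dfun (H_D D q) u) \<in> L_BD (Bmat A) D u"
proof -
  define c where "c = (\<lambda>i. \<Sum>k\<in>UNIV. D$k$i * q$Some k)"
  have Hc: "H_D D q = (\<lambda>u. (\<Sum>i\<in>UNIV. c i * u$i) + (\<Sum>i\<in>UNIV. (c i - D$i$i) * exp (u$i)))"
    unfolding H_D_def c_def by simp
  define H' where "H' = (\<lambda>v::real^'m. (\<Sum>i\<in>UNIV. c i * v$i) + (\<Sum>i\<in>UNIV. (c i - D$i$i) * (exp (u$i) * v$i)))"
  have vn: "((\<lambda>u::real^'m. u$i) has_derivative (\<lambda>v. v$i)) (at u)" for i
    by (rule bounded_linear.has_derivative[OF bounded_linear_vec_nth has_derivative_ident])
  have dH: "(H_D D q has_derivative H') (at u)"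
    unfolding Hc H'_def
    by (intro has_derivative_add has_derivative_sum has_derivative_mult_right vn)
       (auto intro!: derivative_eq_intros vn)
  have dfH: "dfun (H_D D q) u = (\<chi> i. c i + (c i - D$i$i) * exp(u$i))"
    unfolding dfun_def pderiv_at_def frechet_derivative_at[OF dH, symmetric] H'_def
    by (simp add: vec_eq_iff axis_def if_distrib cong: if_cong)
  have part1: "(H_D D q has_derivative (\<lambda>v. dfun (H_D D q) u \<bullet> v)) (at u)"
  proof -
    have "H' = (\<lambda>v. dfun (H_D D q) u \<bullet> v)"
      unfolding dfH H'_def inner_vec_def by (rule ext) (simp add: sum.distrib[symmetric] algebra_simps)
    then show ?thesis using dH by simp
  qed
  have off: "D$k$i = c i" if "k \<noteq> i" for k i
  proof -
    have "(transpose D ** Q1 q)$i$k = 0" using h2 that unfolding is_diagonal_def by auto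
    moreover have "(transpose D ** Q1 q)$i$k = c i - D$k$i"
    proof -
      have "(transpose D ** Q1 q)$i$k = (\<Sum>j\<in>UNIV. D$j$i * (q$Some j - (if j = k then 1 else 0)))"
        by (simp add: matrix_matrix_mult_def transpose_def Q1_def)
      also have "\<dots> = (\<Sum>j\<in>UNIV. D$j$i * q$Some j - (if j = k then D$j$i else 0))"
        by (rule sum.cong) (simp_all add: right_diff_distrib)
      also have "\<dots> = c i - D$k$i" by (simp add: sum_subtractf c_def)
      finally show ?thesis .
    qed
    ultimately show ?thesis by simp
  qed
  have e: "esum u \<noteq> 0" using esum_pos[of u] by simp
  have key: "esum u *\<^sub>R (transpose D *v eta q u) = dfun (H_D D q) u"
  proof (subst vec_eq_iff, rule allI)
    fix i
    have s1: "(\<Sum>k\<in>UNIV. D$k$i * exp (u$k)) = (\<Sum>k\<in>UNIV. c i * exp (u$k) + (if k = i then (D$i$i - c i) * exp (u$k) else 0))"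
      by (rule sum.cong) (auto simp: off algebra_simps)
    also have "\<dots> = c i * (\<Sum>k\<in>UNIV. exp (u$k)) + (D$i$i - c i) * exp (u$i)"
      by (simp add: sum.distrib sum_distrib_left)
    finally have s2: "(\<Sum>k\<in>UNIV. D$k$i * exp (u$k)) = c i * (\<Sum>k\<in>UNIV. exp (u$k)) + (D$i$i - c i) * exp (u$i)" .
    have "(esum u *\<^sub>R (transpose D *v eta q u)) $ i = esum u * (\<Sum>k\<in>UNIV. D$k$i * (q$Some k - exp (u$k) / esum u))"
      by (simp add: matrix_vector_mult_def transpose_def eta_def)
    also have "\<dots> = esum u * c i - (\<Sum>k\<in>UNIV. D$k$i * exp (u$k))"
      using e by (simp add: c_def right_diff_distrib sum_subtractf sum_distrib_left algebra_simps)
    also have "\<dots> = c i + (c i - D$i$i) * exp(u$i)"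
      unfolding s2 esum_def by (simp add: algebra_simps)
    finally show "(esum u *\<^sub>R (transpose D *v eta q u)) $ i = dfun (H_D D q) u $ i"
      by (simp add: dfH)
  qed
  have Yeq: "Ytilde A q u = esum u *\<^sub>R (Bmat A *v eta q u)" unfolding Ytilde_def Xtilde_def ..
  have "(Ytilde A q u, dfun (H_D D q) u) \<in> L_BD (Bmat A) D u"
    unfolding L_BD_def mem_Collect_eq by (rule exI[of _ "eta q u"]) (simp only: Yeq key[symmetric] simp_thms)
  with part1 show ?thesis by blast
qed


theorem theorem4p6:
  fixes A :: "real^('m::finite option)^('m option)"
    and q :: "real^('m option)"
    and D :: "real^'m^'m"
  assumes eq: "formal_equilibrium A q"
    and h1: "antisymmetric_mat (D ** Bmat A)"
    and h2: "is_diagonal (transpose D ** Q1 q)"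
  shows "big_isotropic (L_BD (Bmat A) D)
       \<and> ((\<forall>z. Bmat A *v z = 0 \<and> transpose D *v z = 0 \<longrightarrow> z = 0) \<longrightarrow> dirac (L_BD (Bmat A) D))
       \<and> (\<forall>u. (H_D D q has_derivative (\<lambda>v. dfun (H_D D q) u \<bullet> v)) (at u)
               \<and> (Ytilde A q u, dfun (H_D D q) u) \<in> L_BD (Bmat A) D u)"
proof -
  let ?B = "Bmat A"
  have Leq: "L_BD ?B D = (\<lambda>u. Wset ?B D)" using L_eq by blast
  have sub: "smooth_subbundle (L_BD ?B D)"
    unfolding smooth_subbundle_def
  proof (intro conjI allI impI)
    fix x show "subspace (L_BD ?B D x)" using subspace_W by (simp add: Leq)
  next
    fix x y show "dim (L_BD ?B D x) = dim (L_BD ?B D y)" by (simp add: Leq)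
  next
    fix x w assume w: "w \<in> L_BD ?B D x"
    have "smooth_section (L_BD ?B D) (\<lambda>y. w)"
      unfolding smooth_section_def smooth_def o_def using w by (simp add: Ck_const Leq)
    then show "\<exists>s. smooth_section (L_BD ?B D) s \<and> s x = w" by blast
  qed
  have iso: "\<forall>x. isotropic (L_BD ?B D x)"
    unfolding Leq isotropic_def using W_iso[OF h1] by blast
  have cc: "courant_closed (L_BD ?B D)"
    unfolding courant_closed_def using courant_W[OF h1] by (simp add: Leq)
  have big: "big_isotropic (L_BD ?B D)"
    unfolding big_isotropic_def using sub iso cc by blast
  have dir: "dirac (L_BD ?B D)" if ker: "\<forall>z. ?B *v z = 0 \<and> transpose D *v z = 0 \<longrightarrow> z = 0"
    unfolding dirac_def using big maxiso_W[OF h1 ker] by (simp add: Leq)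
  show ?thesis using big dir ham[OF h2] by blast
qed

end
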